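(* For every CCCP configuration $\mathcal C=\Gamma\triangleright W$: if $\mathcal C\xrightarrow{\sigma}W_1$ and $\mathcal C\xrightarrow{\sigma}W_2$, then $W_1=W_2$.
   Context: CCCP syntax. Fix a set of channels (ranged over by $c,d$) and a set of values containing data variables $x,y$ and a special error value $\mathtt{err}$; closed values $v,w$ contain no variables, and each closed value $v$ has a transmission time $\delta_v\in\mathbb{N}$ with $\delta_v\ge 1$. Expressions $e$ are built from values; closed expressions evaluate to closed values via $[\![e]\!]$. Station code (processes) is given by $P,Q ::= c!\langle e\rangle.P \mid \lfloor ?c(x).P\rfloor Q \mid \sigma.P \mid \tau.P \mid P+Q \mid [b]P,Q \mid X \mid \mathbf{0} \mid \mathrm{fix}\,X.P$, where $b$ is either $e_1=e_2$ or $\mathrm{exp}(c)$, $[b]P,Q$ is a conditional (then-branch $P$, else-branch $Q$), $\lfloor ?c(x).P\rfloor Q$ is a receiver on $c$ with timeout branch $Q$ ($x$ bound in $P$), $\sigma.P$ is a one-unit delay and $\sigma^n.P$ denotes $n$ nested delays. System terms are $W ::= P \mid \lfloor ?c(x).P\rfloor \mid W_1|W_2 \mid \nu c{:}(n,v).W$, where $\lfloor ?c(x).P\rfloor$ is an active receiver ($x$ bound in $P$) and $\nu c{:}(n,v).W$ restricts $c$ with local channel state $(n,v)$. In $\mathrm{fix}\,X.P$ every occurrence of $X$ in $P$ is guarded, i.e. lies within a broadcast prefix, a receiver continuation, a timeout branch, a $\sigma$-prefix, or a branch of a conditional. Terms are identified up to $\alpha$-conversion. A channel environment is a map $\Gamma$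 from channels to $\mathbb{N}\times$(closed values); write $\Gamma\vdash_t c:n$ and $\Gamma\vdash_v c:w$ when $\Gamma(c)=(n,w)$; $c$ is idle in $\Gamma$ if $\Gamma\vdash_t c:0$ and exposed otherwise; $\Gamma[c\mapsto(n,v)]$ is $\Gamma$ updated at $c$; $\Gamma\le\Gamma'$ iff for every $c$, $\Gamma\vdash_t c:n$ and $\Gamma'\vdash_t c:m$ imply $n\le m$. A configuration $\Gamma\triangleright W$ is a channel environment together with a closed system term (no free data or process variables). Intensional semantics. Actions $\lambda$ are $c!v$, $c?v$, $\sigma$, $\tau$. The environment update $\lambda(\Gamma)$ is: $\sigma(\Gamma)(c)=(\max(n-1,0),w)$ whenever $\Gamma(c)=(n,w)$; $c!v(\Gamma)$ agrees with $\Gamma$ except at $c$, where it is $(\delta_v,v)$ if $c$ is idle in $\Gamma$ and $(\max(\delta_v,n),\mathtt{err})$ if $\Gamma\vdash_t c:n>0$; $c?v(\Gamma)=c!v(\Gamma)$; $\tau(\Gamma)=\Gamma$. The predicate $\mathrm{rcv}(W,c)$ on terms is: true for $\lfloor ?d(x).P\rfloor Q$ iff $d=c$; $\mathrm{rcv}(P+Q,c)=\mathrm{rcv}(P,c)\vee\mathrm{rcv}(Q,c)$; $\mathrm{rcv}(\mathrm{fix}\,X.P,c)=\mathrm{rcv}(P,c)$; $\mathrm{rcv}(W_1|W_2,c)=\mathrm{rcv}(W_1,c)\vee\mathrm{rcv}(W_2,c)$; $\mathrm{rcv}(\nu d{:}(n,v).W,c)=\mathrm{rcv}(W,c)$ (with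 $d\neq c$ by $\alpha$-conversion); false for all other forms (broadcasts, $\tau.P$, $\sigma.P$, conditionals, $X$, $\mathbf 0$, active receivers). Then $\mathrm{rcv}(\Gamma\triangleright W,c)$ holds iff $c$ is idle in $\Gamma$ and $\mathrm{rcv}(W,c)$. Transitions $\Gamma\triangleright W\xrightarrow{\lambda}W'$ are the least relation closed under: (Snd) $[\![e]\!]=v$ implies $\Gamma\triangleright c!\langle e\rangle.P\xrightarrow{c!v}\sigma^{\delta_v}.P$; (Rcv) $c$ idle in $\Gamma$ implies $\Gamma\triangleright\lfloor ?c(x).P\rfloor Q\xrightarrow{c?v}\lfloor ?c(x).P\rfloor$; (RcvIgn) $\neg\mathrm{rcv}(\Gamma\triangleright W,c)$ implies $\Gamma\triangleright W\xrightarrow{c?v}W$; (Sync) $\Gamma\triangleright W_1\xrightarrow{c!v}W_1'$ and $\Gamma\triangleright W_2\xrightarrow{c?v}W_2'$ imply $\Gamma\triangleright W_1|W_2\xrightarrow{c!v}W_1'|W_2'$, and symmetrically; (RcvPar) $\Gamma\triangleright W_i\xrightarrow{c?v}W_i'$ for $i=1,2$ imply $\Gamma\triangleright W_1|W_2\xrightarrow{c?v}W_1'|W_2'$; (TimeNil) $\Gamma\triangleright\mathbf 0\xrightarrow{\sigma}\mathbf 0$; (Sleep) $\Gamma\triangleright\sigma.P\xrightarrow{\sigma}P$; (ActRcv) $\Gamma\vdash_t c:n$, $n>1$ imply $\Gamma\triangleright\lfloor ?c(x).P\rfloor\xrightarrow{\sigma}\lfloor ?c(x).P\rfloor$; (EndRcv)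 $\Gamma\vdash_t c:1$, $\Gamma\vdash_v c:w$ imply $\Gamma\triangleright\lfloor ?c(x).P\rfloor\xrightarrow{\sigma}\{w/x\}P$; (Timeout) $c$ idle in $\Gamma$ implies $\Gamma\triangleright\lfloor ?c(x).P\rfloor Q\xrightarrow{\sigma}Q$; (RcvLate) $c$ exposed in $\Gamma$ implies $\Gamma\triangleright\lfloor ?c(x).P\rfloor Q\xrightarrow{\tau}\lfloor ?c(x).\{\mathtt{err}/x\}P\rfloor$; (Tau) $\Gamma\triangleright\tau.P\xrightarrow{\tau}P$; (Then)/(Else) $\Gamma\triangleright[b]P,Q\xrightarrow{\tau}\sigma.P$ if $[\![b]\!]_\Gamma$ is true and $\xrightarrow{\tau}\sigma.Q$ otherwise, where $[\![e_1=e_2]\!]_\Gamma$ is true iff $[\![e_1]\!]=[\![e_2]\!]$ and $[\![\mathrm{exp}(c)]\!]_\Gamma$ is true iff $c$ is exposed in $\Gamma$; (TimePar) $\Gamma\triangleright W_i\xrightarrow{\sigma}W_i'$ for $i=1,2$ imply $\Gamma\triangleright W_1|W_2\xrightarrow{\sigma}W_1'|W_2'$; (TauPar) $\Gamma\triangleright W_1\xrightarrow{\tau}W_1'$ implies $\Gamma\triangleright W_1|W_2\xrightarrow{\tau}W_1'|W_2$, and symmetrically; (Rec) $\Gamma\triangleright\{\mathrm{fix}\,X.P/X\}P\xrightarrow{\lambda}W$ implies $\Gamma\triangleright\mathrm{fix}\,X.P\xrightarrow{\lambda}W$; (Sum) for $\lambda\in\{\tau,c!v\}$, $\Gamma\triangleright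 P\xrightarrow{\lambda}W$ implies $\Gamma\triangleright P+Q\xrightarrow{\lambda}W$, and symmetrically; (SumTime) $\Gamma\triangleright P\xrightarrow{\sigma}P'$, $\Gamma\triangleright Q\xrightarrow{\sigma}Q'$ imply $\Gamma\triangleright P+Q\xrightarrow{\sigma}P'+Q'$; (SumRcv) $\Gamma\triangleright P\xrightarrow{c?v}W$ and $\mathrm{rcv}(\Gamma\triangleright P,c)$ imply $\Gamma\triangleright P+Q\xrightarrow{c?v}W$, and symmetrically; (ResI) $\Gamma[c\mapsto(n,v)]\triangleright W\xrightarrow{c!w}W'$ implies $\Gamma\triangleright\nu c{:}(n,v).W\xrightarrow{\tau}\nu c{:}(c!w(\Gamma[c\mapsto(n,v)]))(c).W'$; (ResV) $\Gamma[c\mapsto(n,v)]\triangleright W\xrightarrow{\lambda}W'$ with $c$ not occurring in $\lambda$ implies $\Gamma\triangleright\nu c{:}(n,v).W\xrightarrow{\lambda}\nu c{:}(\lambda(\Gamma[c\mapsto(n,v)]))(c).W'$. *)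

theory Defs
  imports Main
begin

text \<open>Type parameters: 'c channels, 'v closed values, 'x data variables,
  'p process variables.  Expressions are built from closed values, data
  variables and arbitrary operations on values.\<close>

datatype ('v,'x) exp =
    EVal 'v
  | EVar 'x
  | EApp "'v list \<Rightarrow> 'v" "('v,'x) exp list"

datatype ('c,'v,'x) bexp =
    BEq "('v,'x) exp" "('v,'x) exp"
  | BExp 'c

datatype ('c,'v,'x,'p) proc =
    Snd 'c "('v,'x) exp" "('c,'v,'x,'p) proc"
  | Rcv 'c 'x "('c,'v,'x,'p) proc" "('c,'v,'x,'p) proc"
  | Sig "('c,'v,'x,'p) proc"
  | Tau "('c,'v,'x,'p) proc"
  | Sum "('c,'v,'x,'p) proc" "('c,'v,'x,'p) proc"
  | Cond "('c,'v,'x) bexp" "('c,'v,'x,'p) proc" "('c,'v,'x,'p) proc"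
  | PVar 'p
  | Nil
  | Fix 'p "('c,'v,'x,'p) proc"

datatype ('c,'v,'x,'p) sys =
    Proc "('c,'v,'x,'p) proc"
  | Active 'c 'x "('c,'v,'x,'p) proc"
  | Par "('c,'v,'x,'p) sys" "('c,'v,'x,'p) sys"
  | Res 'c nat 'v "('c,'v,'x,'p) sys"

datatype ('c,'v) act = AOut 'c 'v | AIn 'c 'v | ASig | ATau

type_synonym ('c,'v) env = "'c \<Rightarrow> nat \<times> 'v"

primrec fv_exp :: "('v,'x) exp \<Rightarrow> 'x set" where
  "fv_exp (EVal v) = {}"
| "fv_exp (EVar x) = {x}"
| "fv_exp (EApp f es) = \<Union> (set (map fv_exp es))"

primrec fv_bexp :: "('c,'v,'x) bexp \<Rightarrow> 'x set" where
  "fv_bexp (BEq e1 e2) = fv_exp e1 \<union> fv_exp e2"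
| "fv_bexp (BExp c) = {}"

primrec fv_proc :: "('c,'v,'x,'p) proc \<Rightarrow> 'x set" where
  "fv_proc (Snd c e P) = fv_exp e \<union> fv_proc P"
| "fv_proc (Rcv c x P Q) = (fv_proc P - {x}) \<union> fv_proc Q"
| "fv_proc (Sig P) = fv_proc P"
| "fv_proc (Tau P) = fv_proc P"
| "fv_proc (Sum P Q) = fv_proc P \<union> fv_proc Q"
| "fv_proc (Cond b P Q) = fv_bexp b \<union> fv_proc P \<union> fv_proc Q"
| "fv_proc (PVar X) = {}"
| "fv_proc Nil = {}"
| "fv_proc (Fix X P) = fv_proc P"

primrec fpv_proc :: "('c,'v,'x,'p) proc \<Rightarrow> 'p set" where
  "fpv_proc (Snd c e P) = fpv_proc P"
| "fpv_proc (Rcv c x P Q) = fpv_proc P \<union> fpv_proc Q"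
| "fpv_proc (Sig P) = fpv_proc P"
| "fpv_proc (Tau P) = fpv_proc P"
| "fpv_proc (Sum P Q) = fpv_proc P \<union> fpv_proc Q"
| "fpv_proc (Cond b P Q) = fpv_proc P \<union> fpv_proc Q"
| "fpv_proc (PVar X) = {X}"
| "fpv_proc Nil = {}"
| "fpv_proc (Fix X P) = fpv_proc P - {X}"

primrec fv_sys :: "('c,'v,'x,'p) sys \<Rightarrow> 'x set" where
  "fv_sys (Proc P) = fv_proc P"
| "fv_sys (Active c x P) = fv_proc P - {x}"
| "fv_sys (Par W1 W2) = fv_sys W1 \<union> fv_sys W2"
| "fv_sys (Res c n v W) = fv_sys W"

primrec fpv_sys :: "('c,'v,'x,'p) sys \<Rightarrow> 'p set" where
  "fpv_sys (Proc P) = fpv_proc P"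
| "fpv_sys (Active c x P) = fpv_proc P"
| "fpv_sys (Par W1 W2) = fpv_sys W1 \<union> fpv_sys W2"
| "fpv_sys (Res c n v W) = fpv_sys W"

primrec unguarded :: "'p \<Rightarrow> ('c,'v,'x,'p) proc \<Rightarrow> bool" where
  "unguarded X (Snd c e P) = False"
| "unguarded X (Rcv c x P Q) = False"
| "unguarded X (Sig P) = False"
| "unguarded X (Tau P) = unguarded X P"
| "unguarded X (Sum P Q) = (unguarded X P \<or> unguarded X Q)"
| "unguarded X (Cond b P Q) = False"
| "unguarded X (PVar Y) = (X = Y)"
| "unguarded X Nil = False"
| "unguarded X (Fix Y P) = (X \<noteq> Y \<and> unguarded X P)"

primrec guarded_proc :: "('c,'v,'x,'p) proc \<Rightarrow> bool" where
  "guarded_proc (Snd c e P) = guarded_proc P"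
| "guarded_proc (Rcv c x P Q) = (guarded_proc P \<and> guarded_proc Q)"
| "guarded_proc (Sig P) = guarded_proc P"
| "guarded_proc (Tau P) = guarded_proc P"
| "guarded_proc (Sum P Q) = (guarded_proc P \<and> guarded_proc Q)"
| "guarded_proc (Cond b P Q) = (guarded_proc P \<and> guarded_proc Q)"
| "guarded_proc (PVar X) = True"
| "guarded_proc Nil = True"
| "guarded_proc (Fix X P) = (\<not> unguarded X P \<and> guarded_proc P)"

primrec guarded_sys :: "('c,'v,'x,'p) sys \<Rightarrow> bool" where
  "guarded_sys (Proc P) = guarded_proc P"
| "guarded_sys (Active c x P) = guarded_proc P"
| "guarded_sys (Par W1 W2) = (guarded_sys W1 \<and> guarded_sys W2)"
| "guarded_sys (Res c n v W) = guarded_sys W"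

definition configuration :: "('c,'v) env \<Rightarrow> ('c,'v,'x,'p) sys \<Rightarrow> bool" where
  "configuration \<Gamma> W \<longleftrightarrow> fv_sys W = {} \<and> fpv_sys W = {} \<and> guarded_sys W"

primrec subst_exp :: "'v \<Rightarrow> 'x \<Rightarrow> ('v,'x) exp \<Rightarrow> ('v,'x) exp" where
  "subst_exp w x (EVal v) = EVal v"
| "subst_exp w x (EVar y) = (if y = x then EVal w else EVar y)"
| "subst_exp w x (EApp f es) = EApp f (map (subst_exp w x) es)"

primrec subst_bexp :: "'v \<Rightarrow> 'x \<Rightarrow> ('c,'v,'x) bexp \<Rightarrow> ('c,'v,'x) bexp" where
  "subst_bexp w x (BEq e1 e2) = BEq (subst_exp w x e1) (subst_exp w x e2)"
| "subst_bexp w x (BExp c) = BExp c"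

text \<open>{w/x}P for a closed value w (no capture can occur).\<close>
primrec subst_proc :: "'v \<Rightarrow> 'x \<Rightarrow> ('c,'v,'x,'p) proc \<Rightarrow> ('c,'v,'x,'p) proc" where
  "subst_proc w x (Snd c e P) = Snd c (subst_exp w x e) (subst_proc w x P)"
| "subst_proc w x (Rcv c y P Q) =
     Rcv c y (if y = x then P else subst_proc w x P) (subst_proc w x Q)"
| "subst_proc w x (Sig P) = Sig (subst_proc w x P)"
| "subst_proc w x (Tau P) = Tau (subst_proc w x P)"
| "subst_proc w x (Sum P Q) = Sum (subst_proc w x P) (subst_proc w x Q)"
| "subst_proc w x (Cond b P Q) = Cond (subst_bexp w x b) (subst_proc w x P) (subst_proc w x Q)"
| "subst_proc w x (PVar X) = PVar X"
| "subst_proc w x Nil = Nil"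
| "subst_proc w x (Fix X P) = Fix X (subst_proc w x P)"

text \<open>{R/X}P; used only with R closed, so no capture can occur.\<close>
primrec psubst :: "('c,'v,'x,'p) proc \<Rightarrow> 'p \<Rightarrow> ('c,'v,'x,'p) proc \<Rightarrow> ('c,'v,'x,'p) proc" where
  "psubst R X (Snd c e P) = Snd c e (psubst R X P)"
| "psubst R X (Rcv c y P Q) = Rcv c y (psubst R X P) (psubst R X Q)"
| "psubst R X (Sig P) = Sig (psubst R X P)"
| "psubst R X (Tau P) = Tau (psubst R X P)"
| "psubst R X (Sum P Q) = Sum (psubst R X P) (psubst R X Q)"
| "psubst R X (Cond b P Q) = Cond b (psubst R X P) (psubst R X Q)"
| "psubst R X (PVar Y) = (if Y = X then R else PVar Y)"
| "psubst R X Nil = Nil"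
| "psubst R X (Fix Y P) = Fix Y (if Y = X then P else psubst R X P)"

text \<open>Evaluation [[e]] of closed expressions (the variable case never arises).\<close>
primrec eval :: "('v,'x) exp \<Rightarrow> 'v" where
  "eval (EVal v) = v"
| "eval (EVar x) = undefined"
| "eval (EApp f es) = f (map eval es)"

definition idle :: "('c,'v) env \<Rightarrow> 'c \<Rightarrow> bool" where
  "idle \<Gamma> c \<longleftrightarrow> fst (\<Gamma> c) = 0"

definition exposed :: "('c,'v) env \<Rightarrow> 'c \<Rightarrow> bool" where
  "exposed \<Gamma> c \<longleftrightarrow> \<not> idle \<Gamma> c"

primrec beval :: "('c,'v) env \<Rightarrow> ('c,'v,'x) bexp \<Rightarrow> bool" where
  "beval \<Gamma> (BEq e1 e2) = (eval e1 = eval e2)"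
| "beval \<Gamma> (BExp c) = exposed \<Gamma> c"

definition sigma_pow :: "nat \<Rightarrow> ('c,'v,'x,'p) proc \<Rightarrow> ('c,'v,'x,'p) proc" where
  "sigma_pow n P = (Sig ^^ n) P"

fun upd :: "'v \<Rightarrow> ('v \<Rightarrow> nat) \<Rightarrow> ('c,'v) act \<Rightarrow> ('c,'v) env \<Rightarrow> ('c,'v) env" where
  "upd err \<delta> ASig \<Gamma> = (\<lambda>c. (fst (\<Gamma> c) - 1, snd (\<Gamma> c)))"
| "upd err \<delta> (AOut c v) \<Gamma> =
     \<Gamma>(c := (if idle \<Gamma> c then (\<delta> v, v) else (max (\<delta> v) (fst (\<Gamma> c)), err)))"
| "upd err \<delta> (AIn c v) \<Gamma> =
     \<Gamma>(c := (if idle \<Gamma> c then (\<delta> v, v) else (max (\<delta> v) (fst (\<Gamma> c)), err)))"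
| "upd err \<delta> ATau \<Gamma> = \<Gamma>"

fun act_chan :: "('c,'v) act \<Rightarrow> 'c option" where
  "act_chan (AOut c v) = Some c"
| "act_chan (AIn c v) = Some c"
| "act_chan ASig = None"
| "act_chan ATau = None"

primrec rcv_proc :: "('c,'v,'x,'p) proc \<Rightarrow> 'c \<Rightarrow> bool" where
  "rcv_proc (Snd d e P) c = False"
| "rcv_proc (Rcv d x P Q) c = (d = c)"
| "rcv_proc (Sig P) c = False"
| "rcv_proc (Tau P) c = False"
| "rcv_proc (Sum P Q) c = (rcv_proc P c \<or> rcv_proc Q c)"
| "rcv_proc (Cond b P Q) c = False"
| "rcv_proc (PVar X) c = False"
| "rcv_proc Nil c = False"
| "rcv_proc (Fix X P) c = rcv_proc P c"

text \<open>For nu d with d = c the bound name is renamed away (alpha-conversion),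
  so the restricted term contains no receiver on c.\<close>
primrec rcv_sys :: "('c,'v,'x,'p) sys \<Rightarrow> 'c \<Rightarrow> bool" where
  "rcv_sys (Proc P) c = rcv_proc P c"
| "rcv_sys (Active d x P) c = False"
| "rcv_sys (Par W1 W2) c = (rcv_sys W1 c \<or> rcv_sys W2 c)"
| "rcv_sys (Res d n v W) c = (d \<noteq> c \<and> rcv_sys W c)"

definition rcv_conf :: "('c,'v) env \<Rightarrow> ('c,'v,'x,'p) sys \<Rightarrow> 'c \<Rightarrow> bool" where
  "rcv_conf \<Gamma> W c \<longleftrightarrow> idle \<Gamma> c \<and> rcv_sys W c"

inductive trans :: "'v \<Rightarrow> ('v \<Rightarrow> nat) \<Rightarrow> ('c,'v) env \<Rightarrow> ('c,'v,'x,'p) sys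
                     \<Rightarrow> ('c,'v) act \<Rightarrow> ('c,'v,'x,'p) sys \<Rightarrow> bool"
  for err :: 'v and \<delta> :: "'v \<Rightarrow> nat" where
  Snd: "eval e = v \<Longrightarrow> trans err \<delta> \<Gamma> (Proc (Snd c e P)) (AOut c v) (Proc (sigma_pow (\<delta> v) P))"
| Rcv: "idle \<Gamma> c \<Longrightarrow> trans err \<delta> \<Gamma> (Proc (Rcv c x P Q)) (AIn c v) (Active c x P)"
| RcvIgn: "\<not> rcv_conf \<Gamma> W c \<Longrightarrow> trans err \<delta> \<Gamma> W (AIn c v) W"
| Sync1: "trans err \<delta> \<Gamma> W1 (AOut c v) W1' \<Longrightarrow> trans err \<delta> \<Gamma> W2 (AIn c v) W2' \<Longrightarrow>
          trans err \<delta> \<Gamma> (Par W1 W2) (AOut c v) (Par W1' W2')"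
| Sync2: "trans err \<delta> \<Gamma> W1 (AIn c v) W1' \<Longrightarrow> trans err \<delta> \<Gamma> W2 (AOut c v) W2' \<Longrightarrow>
          trans err \<delta> \<Gamma> (Par W1 W2) (AOut c v) (Par W1' W2')"
| RcvPar: "trans err \<delta> \<Gamma> W1 (AIn c v) W1' \<Longrightarrow> trans err \<delta> \<Gamma> W2 (AIn c v) W2' \<Longrightarrow>
          trans err \<delta> \<Gamma> (Par W1 W2) (AIn c v) (Par W1' W2')"
| TimeNil: "trans err \<delta> \<Gamma> (Proc Nil) ASig (Proc Nil)"
| Sleep: "trans err \<delta> \<Gamma> (Proc (Sig P)) ASig (Proc P)"
| ActRcv: "fst (\<Gamma> c) > 1 \<Longrightarrow> trans err \<delta> \<Gamma> (Active c x P) ASig (Active c x P)"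
| EndRcv: "fst (\<Gamma> c) = 1 \<Longrightarrow> snd (\<Gamma> c) = w \<Longrightarrow>
          trans err \<delta> \<Gamma> (Active c x P) ASig (Proc (subst_proc w x P))"
| Timeout: "idle \<Gamma> c \<Longrightarrow> trans err \<delta> \<Gamma> (Proc (Rcv c x P Q)) ASig (Proc Q)"
| RcvLate: "exposed \<Gamma> c \<Longrightarrow>
          trans err \<delta> \<Gamma> (Proc (Rcv c x P Q)) ATau (Active c x (subst_proc err x P))"
| TauR: "trans err \<delta> \<Gamma> (Proc (Tau P)) ATau (Proc P)"
| Then: "beval \<Gamma> b \<Longrightarrow> trans err \<delta> \<Gamma> (Proc (Cond b P Q)) ATau (Proc (Sig P))"
| Else: "\<not> beval \<Gamma> b \<Longrightarrow> trans err \<delta> \<Gamma> (Proc (Cond b P Q)) ATau (Proc (Sig Q))"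
| TimePar: "trans err \<delta> \<Gamma> W1 ASig W1' \<Longrightarrow> trans err \<delta> \<Gamma> W2 ASig W2' \<Longrightarrow>
          trans err \<delta> \<Gamma> (Par W1 W2) ASig (Par W1' W2')"
| TauPar1: "trans err \<delta> \<Gamma> W1 ATau W1' \<Longrightarrow> trans err \<delta> \<Gamma> (Par W1 W2) ATau (Par W1' W2)"
| TauPar2: "trans err \<delta> \<Gamma> W2 ATau W2' \<Longrightarrow> trans err \<delta> \<Gamma> (Par W1 W2) ATau (Par W1 W2')"
| Rec: "trans err \<delta> \<Gamma> (Proc (psubst (Fix X P) X P)) a W \<Longrightarrow>
          trans err \<delta> \<Gamma> (Proc (Fix X P)) a W"
| Sum1: "(a = ATau \<or> (\<exists>c v. a = AOut c v)) \<Longrightarrow> trans err \<delta> \<Gamma> (Proc P) a W \<Longrightarrow>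
          trans err \<delta> \<Gamma> (Proc (Sum P Q)) a W"
| Sum2: "(a = ATau \<or> (\<exists>c v. a = AOut c v)) \<Longrightarrow> trans err \<delta> \<Gamma> (Proc Q) a W \<Longrightarrow>
          trans err \<delta> \<Gamma> (Proc (Sum P Q)) a W"
| SumTime: "trans err \<delta> \<Gamma> (Proc P) ASig (Proc P') \<Longrightarrow> trans err \<delta> \<Gamma> (Proc Q) ASig (Proc Q') \<Longrightarrow>
          trans err \<delta> \<Gamma> (Proc (Sum P Q)) ASig (Proc (Sum P' Q'))"
| SumRcv1: "trans err \<delta> \<Gamma> (Proc P) (AIn c v) W \<Longrightarrow> rcv_conf \<Gamma> (Proc P) c \<Longrightarrow>
          trans err \<delta> \<Gamma> (Proc (Sum P Q)) (AIn c v) W"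
| SumRcv2: "trans err \<delta> \<Gamma> (Proc Q) (AIn c v) W \<Longrightarrow> rcv_conf \<Gamma> (Proc Q) c \<Longrightarrow>
          trans err \<delta> \<Gamma> (Proc (Sum P Q)) (AIn c v) W"
| ResI: "trans err \<delta> (\<Gamma>(c := (n, v))) W (AOut c w) W' \<Longrightarrow>
          trans err \<delta> \<Gamma> (Res c n v W) ATau
            (Res c (fst (upd err \<delta> (AOut c w) (\<Gamma>(c := (n, v))) c))
                   (snd (upd err \<delta> (AOut c w) (\<Gamma>(c := (n, v))) c)) W')"
| ResV: "trans err \<delta> (\<Gamma>(c := (n, v))) W a W' \<Longrightarrow> act_chan a \<noteq> Some c \<Longrightarrow>
          trans err \<delta> \<Gamma> (Res c n v W) a
            (Res c (fst (upd err \<delta> a (\<Gamma>(c := (n, v))) c))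
                   (snd (upd err \<delta> a (\<Gamma>(c := (n, v))) c)) W')"
| ResShadow: "trans err \<delta> \<Gamma> (Res c n v W) (AIn c w) (Res c n v W)"
  \<comment> \<open>ResV applied to the alpha-renamed term nu c':(n,v).W[c'/c]: the input on
      the now-absent name c is ignored and the local state is unchanged.\<close>

end

theory Submission
  imports Defs
begin

lemma sig_det:
  fixes \<Gamma> :: "('c,'v) env" and W W1 W2 :: "('c,'v,'x,'p) sys"
  shows "trans err \<delta> \<Gamma> W ASig W1 \<Longrightarrow> trans err \<delta> \<Gamma> W ASig W2 \<Longrightarrow> W1 = W2"
proof (induction \<Gamma> W "ASig :: ('c,'v) act" W1 arbitrary: W2 rule: trans.induct)
  case (TimePar \<Gamma> W1 W1' W2 W2' W3)
  from TimePar.prems obtain A B where "W3 = Par A B" "trans err \<delta> \<Gamma> W1 ASig A"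
     "trans err \<delta> \<Gamma> W2 ASig B"
    by (cases rule: trans.cases) simp_all
  then show ?case using TimePar.hyps by simp
next
  case (SumTime \<Gamma> P P' Q Q' W2)
  from SumTime.prems obtain A B where "W2 = Proc (Sum A B)" "trans err \<delta> \<Gamma> (Proc P) ASig (Proc A)"
     "trans err \<delta> \<Gamma> (Proc Q) ASig (Proc B)"
    by (cases rule: trans.cases) simp_all
  then show ?case using SumTime.hyps by fastforce
next
  case (Rec \<Gamma> X P W W2)
  from Rec.prems have "trans err \<delta> \<Gamma> (Proc (psubst (Fix X P) X P)) ASig W2"
    by (cases rule: trans.cases) simp_all
  then show ?case using Rec.hyps by simp
next
  case (ResV \<Gamma> c n v W W' W2)
  from ResV.prems obtain A where A: "W2 = Res c (fst (upd err \<delta> ASig (\<Gamma>(c := (n, v))) c))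
                   (snd (upd err \<delta> ASig (\<Gamma>(c := (n, v))) c)) A" 
     "trans err \<delta> (\<Gamma>(c := (n, v))) W ASig A"
    by (cases rule: trans.cases) simp_all
  have "W' = A" using ResV.hyps A(2) by blast
  then show ?case using A(1) by simp
next
  case (ActRcv \<Gamma> c x P)
  from ActRcv.prems ActRcv.hyps show ?case
    by (cases rule: trans.cases) simp_all
next
  case (EndRcv \<Gamma> c w x P)
  from EndRcv.prems EndRcv.hyps show ?case
    by (cases rule: trans.cases) simp_all
next
  case (Timeout \<Gamma> c x P Q)
  from Timeout.prems show ?case
    by (cases rule: trans.cases) simp_all
next
  case (Sleep \<Gamma> P)
  from Sleep.prems show ?case
    by (cases rule: trans.cases) simp_all
next
  case (TimeNil \<Gamma>)
  from TimeNil.prems show ?case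
    by (cases rule: trans.cases) simp_all
next
  case (Sum1 \<Gamma> P W Q W2)
  from Sum1.hyps(1) show ?case by simp
next
  case (Sum2 \<Gamma> Q W P W2)
  from Sum2.hyps(1) show ?case by simp
qed

theorem mainTheorem2:
  fixes err :: 'v and \<delta> :: "'v \<Rightarrow> nat"
    and \<Gamma> :: "('c,'v) env" and W W1 W2 :: "('c,'v,'x,'p) sys"
  assumes "\<forall>v. \<delta> v \<ge> 1"
    and "configuration \<Gamma> W"
    and "trans err \<delta> \<Gamma> W ASig W1"
    and "trans err \<delta> \<Gamma> W ASig W2"
  shows "W1 = W2"
  by (rule sig_det[OF assms(3,4)])

end
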